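(* Let $V$ be an abelian subgroup of a finite group $G$, and let $g\in G$ be an element normalizing $V$ whose order is coprime to $|V|$. Then $$[V,g]=\mathscr E_{V\langle g\rangle}(g)=\mathscr R_{V\langle g\rangle}(g).$$
   Context: Commutators: $a^b=b^{-1}ab$, $[a,b]=a^{-1}b^{-1}ab$, and $[a,{}_nb]=[\dots[[a,b],b],\dots,b]$ with $b$ repeated $n$ times; $[V,g]$ is the subgroup generated by all $[v,g]$, $v\in V$. For a finite group $H$ and $g\in H$, the right Engel sink $\mathscr R_H(g)$ is the smallest set $\mathscr R\subseteq H$ such that for every $x\in H$ there is $r(x)\ge1$ with $[g,{}_nx]\in\mathscr R$ for all $n\ge r(x)$; the left Engel sink $\mathscr E_H(g)$ is the smallest set $\mathscr E\subseteq H$ such that for every $x\in H$ there is $l(x)\ge1$ with $[x,{}_ng]\in\mathscr E$ for all $n\ge l(x)$ (intersections of such sets are again such sets). *)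

theory Defs
  imports "HOL-Algebra.Algebra"
begin

definition comm :: "('a, 'b) monoid_scheme \<Rightarrow> 'a \<Rightarrow> 'a \<Rightarrow> 'a" where
  "comm G a b = inv\<^bsub>G\<^esub> a \<otimes>\<^bsub>G\<^esub> inv\<^bsub>G\<^esub> b \<otimes>\<^bsub>G\<^esub> a \<otimes>\<^bsub>G\<^esub> b"

primrec iter_comm :: "('a, 'b) monoid_scheme \<Rightarrow> 'a \<Rightarrow> 'a \<Rightarrow> nat \<Rightarrow> 'a" where
  "iter_comm G a b 0 = a"
| "iter_comm G a b (Suc n) = comm G (iter_comm G a b n) b"

definition right_engel_sink :: "('a, 'b) monoid_scheme \<Rightarrow> 'a set \<Rightarrow> 'a \<Rightarrow> 'a set" where
  "right_engel_sink G H g = \<Inter> {R. R \<subseteq> H \<and>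
      (\<forall>x\<in>H. \<exists>r\<ge>1. \<forall>n\<ge>r. iter_comm G g x n \<in> R)}"

definition left_engel_sink :: "('a, 'b) monoid_scheme \<Rightarrow> 'a set \<Rightarrow> 'a \<Rightarrow> 'a set" where
  "left_engel_sink G H g = \<Inter> {E. E \<subseteq> H \<and>
      (\<forall>x\<in>H. \<exists>l\<ge>1. \<forall>n\<ge>l. iter_comm G x g n \<in> E)}"

definition comm_subgroup :: "('a, 'b) monoid_scheme \<Rightarrow> 'a set \<Rightarrow> 'a \<Rightarrow> 'a set" where
  "comm_subgroup G V g = generate G {comm G v g | v. v \<in> V}"

end

theory Submission
  imports Defs
begin

locale eng = group G for G (structure) +
  fixes V g
  assumes fin: "finite (carrier G)" and sub: "subgroup V G"
  and ab: "\<forall>a\<in>V. \<forall>b\<in>V. a \<otimes> b = b \<otimes> a" and gc: "g \<in> carrier G"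
  and img: "(\<lambda>v. inv g \<otimes> v \<otimes> g) ` V = V"
  and cop: "coprime (ord g) (card V)"
begin

lemma Vc: "v \<in> V \<Longrightarrow> v \<in> carrier G" by (rule subgroup.mem_carrier[OF sub])
lemma Vm: "a \<in> V \<Longrightarrow> b \<in> V \<Longrightarrow> a \<otimes> b \<in> V" by (rule subgroup.m_closed[OF sub])
lemma Vi: "a \<in> V \<Longrightarrow> inv a \<in> V" by (rule subgroup.m_inv_closed[OF sub])
lemma V1: "\<one> \<in> V" by (rule subgroup.one_closed[OF sub])
lemma abV: "a \<in> V \<Longrightarrow> b \<in> V \<Longrightarrow> a \<otimes> b = b \<otimes> a" using ab by simp
lemma conjV: "v \<in> V \<Longrightarrow> inv g \<otimes> v \<otimes> g \<in> V"
proof -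
  assume "v \<in> V"
  then have "inv g \<otimes> v \<otimes> g \<in> (\<lambda>v. inv g \<otimes> v \<otimes> g) ` V" by (rule imageI)
  then show ?thesis unfolding img .
qed

lemma conj_mult: "a \<in> carrier G \<Longrightarrow> b \<in> carrier G \<Longrightarrow> y \<in> carrier G \<Longrightarrow>
   inv y \<otimes> (a \<otimes> b) \<otimes> y = (inv y \<otimes> a \<otimes> y) \<otimes> (inv y \<otimes> b \<otimes> y)"
  by (simp add: m_assoc) (simp add: m_assoc[symmetric])

lemma conj_inv: "a \<in> carrier G \<Longrightarrow> y \<in> carrier G \<Longrightarrow>
   inv y \<otimes> inv a \<otimes> y = inv (inv y \<otimes> a \<otimes> y)"
  by (simp add: m_assoc inv_mult_group)

lemma conjpowV: "v \<in> V \<Longrightarrow> inv (g[^](k::nat)) \<otimes> v \<otimes> g[^]k \<in> V"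
proof (induction k arbitrary: v)
  case 0 then show ?case using Vc by simp
next
  case (Suc k)
  have "inv (g[^](Suc k)) \<otimes> v \<otimes> g[^](Suc k) = inv g \<otimes> (inv (g[^]k) \<otimes> v \<otimes> g[^]k) \<otimes> g"
    using Suc.prems Vc gc by (simp add: m_assoc inv_mult_group)
  then show ?case using Suc conjV by simp
qed

definition phi where "phi v = comm G v g"

lemma phi_eq: "v \<in> carrier G \<Longrightarrow> phi v = inv v \<otimes> (inv g \<otimes> v \<otimes> g)"
  using gc by (simp add: phi_def comm_def m_assoc)

lemma phiV: "v \<in> V \<Longrightarrow> phi v \<in> V"
  using phi_eq Vc Vi Vm conjV by simp

lemma phi_mult: assumes a: "a \<in> V" and b: "b \<in> V" shows "phi (a \<otimes> b) = phi a \<otimes> phi b"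
proof -
  define a' where "a' = inv g \<otimes> a \<otimes> g"
  define b' where "b' = inv g \<otimes> b \<otimes> g"
  have a'V: "a' \<in> V" "b' \<in> V" using a b conjV a'_def b'_def by auto
  have c: "a \<in> carrier G" "b \<in> carrier G" "a' \<in> carrier G" "b' \<in> carrier G" using a b a'V Vc by auto
  have "phi (a \<otimes> b) = inv b \<otimes> inv a \<otimes> (a' \<otimes> b')"
    using c gc by (simp add: phi_eq conj_mult a'_def b'_def inv_mult_group)
  also have "\<dots> = inv b \<otimes> (inv a \<otimes> a') \<otimes> b'" using c by (simp add: m_assoc)
  also have "inv b \<otimes> (inv a \<otimes> a') = (inv a \<otimes> a') \<otimes> inv b"
    using abV[of "inv b" "inv a \<otimes> a'"] a b a'V Vi Vm by simp
  also have "inv a \<otimes> a' \<otimes> inv b \<otimes> b' = phi a \<otimes> phi b"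
    using c by (simp add: phi_eq a'_def b'_def m_assoc)
  finally show ?thesis .
qed

definition W where "W = phi ` V"

lemma phi1: "phi \<one> = \<one>" using gc by (simp add: phi_eq)

lemma phi_inv: "a \<in> V \<Longrightarrow> inv (phi a) = phi (inv a)"
proof -
  assume a: "a \<in> V"
  have "phi (inv a) \<otimes> phi a = \<one>"
    using phi_mult[of "inv a" a] a Vi Vc phi1 by simp
  then show ?thesis using inv_equality a Vi phiV Vc by blast
qed

lemma WV: "W \<subseteq> V" using phiV W_def by auto

lemma subW: "subgroup W G"
proof
  show "W \<subseteq> carrier G" using WV Vc by auto
  show "\<one> \<in> W" using phi1 V1 W_def by force
  fix x y assume "x \<in> W" "y \<in> W"
  then obtain a b where "a \<in> V" "b \<in> V" "x = phi a" "y = phi b" using W_def by auto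
  then have "x \<otimes> y = phi (a \<otimes> b)" "inv x = phi (inv a)" using phi_mult phi_inv by auto
  then show "x \<otimes> y \<in> W" "inv x \<in> W"
    unfolding W_def using \<open>a \<in> V\<close> \<open>b \<in> V\<close> Vm Vi by auto
qed

lemma Wc: "w \<in> W \<Longrightarrow> w \<in> carrier G" using WV Vc by auto
lemma Wm: "a \<in> W \<Longrightarrow> b \<in> W \<Longrightarrow> a \<otimes> b \<in> W" by (rule subgroup.m_closed[OF subW])
lemma Wi: "a \<in> W \<Longrightarrow> inv a \<in> W" by (rule subgroup.m_inv_closed[OF subW])

lemma conjW: assumes w: "w \<in> W" shows "inv g \<otimes> w \<otimes> g \<in> W"
proof -
  obtain b where b: "b \<in> V" "w = phi b" using w W_def by auto
  define b' where "b' = inv g \<otimes> b \<otimes> g"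
  have b': "b' \<in> V" using b conjV b'_def by auto
  have "inv g \<otimes> w \<otimes> g = (inv g \<otimes> inv b \<otimes> g) \<otimes> (inv g \<otimes> b' \<otimes> g)"
    using b b' Vc gc conj_mult by (simp add: phi_eq b'_def)
  also have "\<dots> = phi b'" using b b' Vc gc conj_inv by (simp add: phi_eq b'_def)
  finally show ?thesis using b' W_def by auto
qed

lemma conjpowW: "w \<in> W \<Longrightarrow> inv (g[^](k::nat)) \<otimes> w \<otimes> g[^]k \<in> W"
proof (induction k arbitrary: w)
  case 0 then show ?case using Wc by simp
next
  case (Suc k)
  have "inv (g[^](Suc k)) \<otimes> w \<otimes> g[^](Suc k) = inv g \<otimes> (inv (g[^]k) \<otimes> w \<otimes> g[^]k) \<otimes> g"
    using Suc.prems Wc gc by (simp add: m_assoc inv_mult_group)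
  then show ?case using Suc conjW by simp
qed

lemma phiW: "w \<in> W \<Longrightarrow> phi w \<in> W" using WV W_def by auto

lemma conj_pow: "x \<in> carrier G \<Longrightarrow> y \<in> carrier G \<Longrightarrow> inv y \<otimes> x[^](i::nat) \<otimes> y = (inv y \<otimes> x \<otimes> y)[^]i"
proof (induction i)
  case 0 then show ?case by simp
next
  case (Suc i) then show ?case using conj_mult[of "x[^]i" x y] by simp
qed

lemma powV: "w \<in> V \<Longrightarrow> w [^] card V = \<one>"
proof -
  assume w: "w \<in> V"
  have grp: "group (G\<lparr>carrier := V\<rparr>)" using subgroup.subgroup_is_group[OF sub is_group] .
  have "comm_group (G\<lparr>carrier := V\<rparr>)"
    by (rule group.group_comm_groupI[OF grp]) (use ab in auto)
  then have "w [^]\<^bsub>G\<lparr>carrier := V\<rparr>\<^esub> card V = \<one>"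
    using comm_group.power_order_eq_one[of "G\<lparr>carrier := V\<rparr>" w] w fin
      finite_subset[OF subgroup.subset[OF sub]] by simp
  then show ?thesis using nat_pow_consistent by simp
qed

lemma phi_fix: assumes w: "w \<in> W" and p: "phi w = \<one>" shows "w = \<one>"
proof -
  obtain v where v: "v \<in> V" "w = phi v" using w W_def by auto
  have wc: "w \<in> carrier G" "v \<in> carrier G" using w v Wc Vc by auto
  have cw: "inv g \<otimes> w \<otimes> g = w"
  proof -
    have "inv w \<otimes> (inv g \<otimes> w \<otimes> g) = \<one>" using p wc gc phi_eq by simp
    then show ?thesis using wc gc inv_solve_left' by (metis m_closed inv_closed r_one)
  qed
  have cv: "inv g \<otimes> v \<otimes> g = v \<otimes> w"
    using v wc gc phi_eq by (simp add: m_assoc[symmetric])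
  have it: "inv (g[^]i) \<otimes> v \<otimes> g[^]i = v \<otimes> w[^]i" for i :: nat
  proof (induction i)
    case 0 then show ?case using wc by simp
  next
    case (Suc i)
    have "inv (g[^](Suc i)) \<otimes> v \<otimes> g[^](Suc i) = inv g \<otimes> (inv (g[^]i) \<otimes> v \<otimes> g[^]i) \<otimes> g"
      using wc gc by (simp add: m_assoc inv_mult_group)
    also have "\<dots> = inv g \<otimes> (v \<otimes> w[^]i) \<otimes> g" using Suc by simp
    also have "\<dots> = (inv g \<otimes> v \<otimes> g) \<otimes> (inv g \<otimes> w[^]i \<otimes> g)" using conj_mult wc gc by simp
    also have "\<dots> = v \<otimes> w \<otimes> w[^]i" using cv conj_pow[of w g i] cw wc gc by simp
    also have "\<dots> = v \<otimes> w[^](Suc i)" using wc nat_pow_comm[of w "Suc 0" i] by (simp add: m_assoc)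
    finally show ?case .
  qed
  have "v \<otimes> w[^](ord g) = v \<otimes> \<one>" using it[of "ord g"] gc wc by simp
  then have m1: "w[^](ord g) = \<one>" using wc l_cancel by (meson nat_pow_closed one_closed)
  have m2: "w [^] card V = \<one>" using powV w WV by auto
  have "ord w dvd ord g" "ord w dvd card V" using m1 m2 pow_eq_id wc by auto
  then have "ord w = 1" using cop by (meson coprime_common_divisor_nat)
  then show ?thesis using ord_eq_1 wc by simp
qed

lemma phi_inj: "inj_on phi W"
proof (rule inj_onI)
  fix a b assume a: "a \<in> W" and b: "b \<in> W" and e: "phi a = phi b"
  obtain a0 b0 where ab0: "a0 \<in> V" "b0 \<in> V" "a = phi a0" "b = phi b0" using a b W_def by auto
  have aV: "a \<in> V" and bV: "b \<in> V" using a b WV by auto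
  have "phi (a \<otimes> inv b) = phi a \<otimes> inv (phi b)"
    using phi_mult[OF aV Vi[OF bV]] phi_inv[OF bV] by simp
  also have "\<dots> = \<one>" using e phiW[OF b] Wc by simp
  finally have "a \<otimes> inv b = \<one>" by (rule phi_fix[OF Wm[OF a Wi[OF b]]])
  then have "inv (inv b) = a" by (intro inv_equality) (use a b Wc in auto)
  then show "a = b" using b Wc by simp
qed

lemma cancel1 [simp]: "x \<in> carrier G \<Longrightarrow> y \<in> carrier G \<Longrightarrow> inv x \<otimes> (x \<otimes> y) = y"
  by (simp add: m_assoc[symmetric])
lemma cancel2 [simp]: "x \<in> carrier G \<Longrightarrow> y \<in> carrier G \<Longrightarrow> x \<otimes> (inv x \<otimes> y) = y"
  by (simp add: m_assoc[symmetric])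

lemma funpow_W: "x \<in> W \<Longrightarrow> (phi^^k) x \<in> W"
  by (induction k) (auto simp: phiW)

lemma funpow_inj: "inj_on (phi^^k) W"
proof (induction k)
  case 0 then show ?case by simp
next
  case (Suc k)
  have "inj_on (phi \<circ> (phi^^k)) W"
    by (rule comp_inj_on[OF Suc]) (use phi_inj funpow_W in \<open>auto intro: inj_on_subset\<close>)
  then show ?case by (simp add: funpow_Suc_right[symmetric] funpow_swap1 comp_def)
qed

lemma periodic: assumes w: "w \<in> W" shows "\<exists>n\<ge>l. (phi^^n) w = w"
proof -
  define s where "s n = (phi^^n) w" for n
  have sW: "range s \<subseteq> W" using funpow_W w s_def by auto
  have "finite W" using finite_subset[OF _ fin] Wc by auto
  then have "\<not> inj s"
  proof (intro notI)
    assume i: "inj s" and fW: "finite W"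
    have "finite (range s)" using fW sW finite_subset by blast
    then have "finite (UNIV :: nat set)" using finite_imageD i by blast
    then show False by simp
  qed
  then obtain a b where ab: "a \<noteq> b" "s a = s b" unfolding inj_def by auto
  have m1: "min a b < max a b" using ab by auto
  have m2: "s (min a b) = s (max a b)" using ab by (cases "a \<le> b") (auto simp: min_def max_def)
  define a' where "a' = min a b"
  define b' where "b' = max a b"
  have ab': "a' < b'" "s a' = s b'" using m1 m2 a'_def b'_def by auto
  obtain a b where ab: "a < b" "s a = s b" using ab' by blast
  define p where "p = b - a"
  have p: "p > 0" using ab p_def by simp
  have "(phi^^a) ((phi^^p) w) = (phi^^a) w"
    using ab s_def p_def by (simp add: funpow_add[symmetric, unfolded comp_def, THEN fun_cong] add.commute)
  then have pw: "(phi^^p) w = w" using funpow_inj[of a] funpow_W w unfolding inj_on_def by blast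
  have pt: "(phi^^(p*t)) w = w" for t
  proof (induction t)
    case 0 then show ?case by simp
  next
    case (Suc t)
    have "(phi^^(p*Suc t)) w = (phi^^p) ((phi^^(p*t)) w)"
      by (simp add: funpow_add)
    then show ?case using Suc pw by simp
  qed
  have "p * l \<ge> l" using p by simp
  then show ?thesis using pt by blast
qed

lemma gH: "g \<in> generate G (insert g V)" by (rule generate.incl) simp
lemma VH: "V \<subseteq> generate G (insert g V)"
proof
  fix v assume "v \<in> V" then show "v \<in> generate G (insert g V)" by (rule generate.incl[OF insertI2])
qed

lemma inv_g: "inv g = g[^](ord g - 1)"
proof -
  have o: "Suc (ord g - 1) = ord g" using ord_ge_1[OF fin gc] by simp
  have "g[^](ord g - 1) \<otimes> g = g[^](Suc (ord g - 1))" by simp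
  also have "\<dots> = \<one>" unfolding o using gc by simp
  finally have "g[^](ord g - 1) \<otimes> g = \<one>" .
  then show ?thesis by (intro inv_equality) (use gc in auto)
qed

lemma Hform: "x \<in> generate G (insert g V) \<Longrightarrow> \<exists>k v. v \<in> V \<and> x = g[^](k::nat) \<otimes> v"
proof (induction rule: generate.induct)
  case one then show ?case using V1 by (intro exI[of _ 0] exI[of _ \<one>]) simp
next
  case (incl h)
  then show ?case
  proof
    assume "h = g" then show ?thesis using V1 gc by (intro exI[of _ 1] exI[of _ \<one>]) simp
  next
    assume "h \<in> V" then show ?thesis using Vc by (intro exI[of _ 0] exI[of _ h]) simp
  qed
next
  case (inv h)
  then show ?case
  proof
    assume "h = g" then show ?thesis using V1 gc inv_g by (intro exI[of _ "ord g - 1"] exI[of _ \<one>]) simp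
  next
    assume "h \<in> V" then show ?thesis using Vc Vi by (intro exI[of _ 0] exI[of _ "inv h"]) simp
  qed
next
  case (eng h1 h2)
  obtain k v l u where kv: "v \<in> V" "h1 = g[^](k::nat) \<otimes> v" and lu: "u \<in> V" "h2 = g[^](l::nat) \<otimes> u"
    using eng by blast
  have c: "v \<in> carrier G" "u \<in> carrier G" using kv lu Vc by auto
  have "h1 \<otimes> h2 = g[^]k \<otimes> g[^]l \<otimes> ((inv (g[^]l) \<otimes> v \<otimes> g[^]l) \<otimes> u)"
    using kv lu c gc by (simp add: m_assoc)
  also have "\<dots> = g[^](k+l) \<otimes> ((inv (g[^]l) \<otimes> v \<otimes> g[^]l) \<otimes> u)" using gc nat_pow_mult by simp
  finally show ?case using conjpowV kv lu Vm by blast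
qed

lemma gpow_comm: "g[^](k::nat) \<otimes> g = g \<otimes> g[^]k"
  using gc nat_pow_Suc nat_pow_Suc2 by metis

lemma commC: assumes v: "v \<in> V" shows "comm G (g[^](k::nat) \<otimes> v) g = phi v"
proof -
  let ?y = "g[^]k"
  have c: "v \<in> carrier G" "?y \<in> carrier G" using v Vc gc by auto
  have e: "inv ?y \<otimes> inv g = inv g \<otimes> inv ?y"
    using inv_mult_group[of g ?y] inv_mult_group[of ?y g] gpow_comm c gc by simp
  have "comm G (?y \<otimes> v) g = inv v \<otimes> ((inv ?y \<otimes> inv g) \<otimes> (?y \<otimes> (v \<otimes> g)))"
    using c gc by (simp add: comm_def inv_mult_group m_assoc)
  also have "\<dots> = inv v \<otimes> (inv g \<otimes> (v \<otimes> g))" using e c gc by (simp add: m_assoc)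
  finally show ?thesis using c gc by (simp add: phi_eq m_assoc)
qed

lemma commB: assumes v: "v \<in> V" shows "comm G g (g[^](k::nat) \<otimes> v) = phi (inv v)"
proof -
  let ?y = "g[^]k"
  have c: "v \<in> carrier G" "?y \<in> carrier G" using v Vc gc by auto
  have e: "inv ?y \<otimes> (g \<otimes> ?y) = g" using gpow_comm[of k, symmetric] c gc by simp
  have "comm G g (?y \<otimes> v) = inv g \<otimes> (inv v \<otimes> ((inv ?y \<otimes> (g \<otimes> ?y)) \<otimes> v))"
    using c gc by (simp add: comm_def inv_mult_group m_assoc)
  also have "\<dots> = (inv g \<otimes> inv v \<otimes> g) \<otimes> v" using e c gc by (simp add: m_assoc)
  also have "\<dots> = v \<otimes> (inv g \<otimes> inv v \<otimes> g)" using abV conjV Vi v by blast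
  finally show ?thesis using c gc by (simp add: phi_eq)
qed

lemma commA: assumes u: "u \<in> W" and v: "v \<in> V"
  shows "comm G u (g[^](k::nat) \<otimes> v) = inv u \<otimes> (inv (g[^]k) \<otimes> u \<otimes> g[^]k)"
proof -
  let ?y = "g[^]k"
  let ?u = "inv ?y \<otimes> u \<otimes> ?y"
  have uV: "?u \<in> V" using conjpowW u WV by blast
  have c: "v \<in> carrier G" "?y \<in> carrier G" "u \<in> carrier G" "?u \<in> carrier G" using v u uV Vc Wc gc by auto
  have "comm G u (?y \<otimes> v) = inv u \<otimes> (inv v \<otimes> (?u \<otimes> v))"
    using c gc by (simp add: comm_def inv_mult_group m_assoc)
  also have "?u \<otimes> v = v \<otimes> ?u" using abV uV v by blast
  finally show ?thesis using c by simp
qed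

lemma iterL: "iter_comm G a g n = (phi^^n) a"
  by (induction n) (simp_all add: phi_def)

lemma main1: "comm_subgroup G V g = W"
proof -
  let ?H = "generate G (insert g V)"
  have WH: "W \<subseteq> ?H" using WV VH by auto
  have "{comm G v g | v. v \<in> V} = W" unfolding W_def phi_def by auto
  then show "comm_subgroup G V g = W"
    unfolding comm_subgroup_def using generate_subgroup_incl[OF subset_refl subW] generate.incl[of _ W G]
    by auto
qed

lemma main2: "left_engel_sink G (generate G (insert g V)) g = W"
proof -
  let ?H = "generate G (insert g V)"
  have WH: "W \<subseteq> ?H" using WV VH by auto
  show "left_engel_sink G ?H g = W"
    unfolding left_engel_sink_def
  proof (rule antisym)
    have "W \<in> {E. E \<subseteq> ?H \<and> (\<forall>x\<in>?H. \<exists>l\<ge>1. \<forall>n\<ge>l. iter_comm G x g n \<in> E)}"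
    proof (intro CollectI conjI WH ballI)
      fix x assume "x \<in> ?H"
      then obtain k v where kv: "v \<in> V" "x = g[^](k::nat) \<otimes> v" using Hform by blast
      have "iter_comm G x g n \<in> W" if "n \<ge> 1" for n
      proof -
        define m where "m = n - 1"
        have m: "n = Suc m" using that m_def by simp
        have "iter_comm G x g n = (phi^^m) (phi x)" unfolding m iterL funpow_Suc_right by simp
        also have "phi x = phi v" using commC kv by (simp add: phi_def)
        finally show ?thesis using funpow_W kv W_def by auto
      qed
      then show "\<exists>l\<ge>1. \<forall>n\<ge>l. iter_comm G x g n \<in> W" by blast
    qed
    then show "\<Inter> {E. E \<subseteq> ?H \<and> (\<forall>x\<in>?H. \<exists>l\<ge>1. \<forall>n\<ge>l. iter_comm G x g n \<in> E)} \<subseteq> W"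
      by (rule Inter_lower)
  next
    show "W \<subseteq> \<Inter> {E. E \<subseteq> ?H \<and> (\<forall>x\<in>?H. \<exists>l\<ge>1. \<forall>n\<ge>l. iter_comm G x g n \<in> E)}"
    proof (rule Inter_greatest, safe)
      fix E w assume E: "\<forall>x\<in>?H. \<exists>l\<ge>1. \<forall>n\<ge>l. iter_comm G x g n \<in> E" and w: "w \<in> W"
      obtain l where l: "\<forall>n\<ge>l. iter_comm G w g n \<in> E" using E w WH by blast
      obtain n where "n \<ge> l" "(phi^^n) w = w" using periodic w by blast
      then show "w \<in> E" using l iterL by metis
    qed
  qed
qed

lemma main3: "right_engel_sink G (generate G (insert g V)) g = W"
proof -
  let ?H = "generate G (insert g V)"
  have WH: "W \<subseteq> ?H" using WV VH by auto
  show "right_engel_sink G ?H g = W"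
    unfolding right_engel_sink_def
  proof (rule antisym)
    have "W \<in> {R. R \<subseteq> ?H \<and> (\<forall>x\<in>?H. \<exists>r\<ge>1. \<forall>n\<ge>r. iter_comm G g x n \<in> R)}"
    proof (intro CollectI conjI WH ballI)
      fix x assume "x \<in> ?H"
      then obtain k v where kv: "v \<in> V" "x = g[^](k::nat) \<otimes> v" using Hform by blast
      have it: "iter_comm G g x (Suc m) \<in> W" for m
      proof (induction m)
        case 0 then show ?case using commB kv Vi W_def by auto
      next
        case (Suc m)
        then show ?case using commA[OF Suc kv(1), of k] kv conjpowW Wi Wm Suc by simp
      qed
      have "iter_comm G g x n \<in> W" if "n \<ge> 1" for n
        using it[of "n - 1"] that by simp
      then show "\<exists>r\<ge>1. \<forall>n\<ge>r. iter_comm G g x n \<in> W" by blast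
    qed
    then show "\<Inter> {R. R \<subseteq> ?H \<and> (\<forall>x\<in>?H. \<exists>r\<ge>1. \<forall>n\<ge>r. iter_comm G g x n \<in> R)} \<subseteq> W"
      by (rule Inter_lower)
  next
    show "W \<subseteq> \<Inter> {R. R \<subseteq> ?H \<and> (\<forall>x\<in>?H. \<exists>r\<ge>1. \<forall>n\<ge>r. iter_comm G g x n \<in> R)}"
    proof (rule Inter_greatest, safe)
      fix R w assume R: "\<forall>x\<in>?H. \<exists>r\<ge>1. \<forall>n\<ge>r. iter_comm G g x n \<in> R" and w: "w \<in> W"
      obtain b where b: "b \<in> V" "w = phi b" using w W_def by auto
      let ?x = "g[^](1::nat) \<otimes> inv b"
      have ib: "inv b \<in> ?H" using VH Vi b by blast
      have g1: "g[^](1::nat) = g" using gc by simp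
      have xH: "?x \<in> ?H" unfolding g1 by (rule generate.eng[OF gH ib])
      have it: "iter_comm G g ?x (Suc m) = (phi^^m) w" for m
      proof (induction m)
        case 0 then show ?case using commB[of "inv b" 1] b Vi Vc by simp
      next
        case (Suc m)
        have u: "(phi^^m) w \<in> W" using funpow_W w by blast
        show ?case using Suc commA[OF u Vi[OF b(1)], of 1] u Wc gc by (simp add: phi_eq)
      qed
      obtain r where r: "r \<ge> 1" "\<forall>n\<ge>r. iter_comm G g ?x n \<in> R" using R xH by blast
      obtain n where "n \<ge> r" "(phi^^n) w = w" using periodic w by blast
      then show "w \<in> R" using r it[of n] by (metis le_SucI)
    qed
  qed
qed

end

theorem lemma3p2:
  fixes G (structure) and V :: "'a set" and g :: 'a
  assumes "group G" and "finite (carrier G)"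
    and "subgroup V G"
    and "\<forall>a\<in>V. \<forall>b\<in>V. a \<otimes> b = b \<otimes> a"
    and "g \<in> carrier G"
    and "(\<lambda>v. inv g \<otimes> v \<otimes> g) ` V = V"
    and "coprime (group.ord G g) (card V)"
  shows "comm_subgroup G V g = left_engel_sink G (generate G (insert g V)) g
       \<and> left_engel_sink G (generate G (insert g V)) g
         = right_engel_sink G (generate G (insert g V)) g"
proof -
  have e: "eng G V g" unfolding eng_def eng_axioms_def using assms by auto
  show ?thesis using eng.main1[OF e] eng.main2[OF e] eng.main3[OF e] by simp
qed

end
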